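(* (a) For every $L\in\mathbb{N}$, $\mathcal{C}(L+1)-\mathcal{C}(L)\ge 2$. (b) For every $n\ge 2$ and every $L\in\mathbb{N}$ with $2^n\le L\le 2^n+2^{n-1}-1$, $\mathcal{C}(L+1)-\mathcal{C}(L)\ge 3$.
   Context: Let $\mathcal{A}=\{a,x,y,z\}$ and let $\tau$ be the substitution (monoid morphism on finite words over $\mathcal{A}$) defined by $\tau(a)=axa$, $\tau(x)=y$, $\tau(y)=z$, $\tau(z)=x$. For a finite word $w$, $\mathrm{Sub}(w)$ denotes the set of finite (contiguous) subwords of $w$. Let $\mathrm{Sub}_\tau=\bigcup_{s\in\mathcal{A},\,n\in\mathbb{N}\cup\{0\}}\mathrm{Sub}(\tau^n(s))$. The word complexity is $\mathcal{C}(L)=$ the number of elements of $\mathrm{Sub}_\tau$ of length $L$. *)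

theory Defs
  imports Main
begin

datatype letter = La | Lx | Ly | Lz

fun tau_letter :: "letter \<Rightarrow> letter list" where
  "tau_letter La = [La, Lx, La]"
| "tau_letter Lx = [Ly]"
| "tau_letter Ly = [Lz]"
| "tau_letter Lz = [Lx]"

definition tau :: "letter list \<Rightarrow> letter list" where
  "tau w = concat (map tau_letter w)"

definition Sub :: "'a list \<Rightarrow> 'a list set" where
  "Sub w = {v. \<exists>p s. w = p @ v @ s}"

definition Sub_tau :: "letter list set" where
  "Sub_tau = (\<Union>s. \<Union>n::nat. Sub ((tau ^^ n) [s]))"

definition complexity :: "nat \<Rightarrow> nat" where
  "complexity L = card {v \<in> Sub_tau. length v = L}"

end

theory Submission
  imports Defs
begin

fun nx :: "letter \<Rightarrow> letter" where
  "nx La = Lx" | "nx Lx = Ly" | "nx Ly = Lz" | "nx Lz = Lx"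

function u :: "nat \<Rightarrow> letter" where
  "u n = (if n = 0 \<or> odd n then La else nx (u (n div 2)))"
  by auto
termination by (relation "measure id") auto

declare u.simps[simp del]
lemma u_0: "u 0 = La" by (subst u.simps) simp
lemma u_1: "u 1 = La" by (subst u.simps) simp

lemma nx_ne: "nx c \<noteq> La" by (cases c) auto
lemma nx_neq: "nx c \<noteq> c" by (cases c) auto
lemma nx3: "c \<noteq> La \<Longrightarrow> nx (nx (nx c)) = c" by (cases c) auto
lemma nx_dist: "c \<noteq> La \<Longrightarrow> nx (nx c) \<noteq> c" by (cases c) auto

lemma funpow_nx_ne: "n \<ge> 1 \<Longrightarrow> (nx ^^ n) c \<noteq> La"
  by (cases n) (auto simp: nx_ne)

lemma u_Suc0: "u (Suc 0) = La" using u_1 by simp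
lemma funpow_nx_ne2: "c \<noteq> La \<Longrightarrow> (nx ^^ n) c \<noteq> La"
  by (cases n) (auto simp: nx_ne)

lemma u_even: "k \<ge> 1 \<Longrightarrow> u (2*k) = nx (u k)"
  by (subst u.simps) simp
lemma u_odd: "u (2*k+1) = La"
  by (subst u.simps) simp
lemma u_pow: "q \<ge> 1 \<Longrightarrow> u (2^k * q) = (nx ^^ k) (u q)"
proof (induction k)
  case 0 then show ?case by simp
next
  case (Suc k)
  have "u (2^Suc k * q) = u (2 * (2^k*q))" by (simp add: mult.assoc)
  also have "\<dots> = nx (u (2^k*q))" using Suc.prems by (intro u_even) simp
  finally show ?case using Suc by simp
qed

lemma u_per: "0 < i \<Longrightarrow> i < 2^k \<Longrightarrow> u (2^k*t + i) = u i"
proof (induction k arbitrary: i)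
  case 0 then show ?case by simp
next
  case (Suc k)
  show ?case
  proof (cases "even i")
    case True
    then obtain j where j: "i = 2*j" by auto
    with Suc.prems have j1: "0 < j" "j < 2^k" by auto
    have "u (2^Suc k*t + i) = u (2*(2^k*t + j))" by (simp add: j algebra_simps)
    also have "\<dots> = nx (u (2^k*t+j))" using j1 by (intro u_even) simp
    also have "\<dots> = nx (u j)" using Suc.IH j1 by simp
    also have "\<dots> = u i" using j j1 u_even by simp
    finally show ?thesis .
  next
    case False
    then obtain j where j: "i = 2*j+1" using oddE by blast
    have "2^Suc k*t + i = 2*(2^k*t+j)+1" by (simp add: j algebra_simps)
    then show ?thesis using j u_odd by metis
  qed
qed

definition seg :: "nat \<Rightarrow> nat \<Rightarrow> letter list" where
  "seg i L = map u [i..<i+L]"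

lemma length_seg[simp]: "length (seg i L) = L" by (simp add: seg_def)
lemma nth_seg: "k < L \<Longrightarrow> seg i L ! k = u (i+k)" by (simp add: seg_def)
lemma seg_add: "seg i (a+b) = seg i a @ seg (i+a) b"
proof -
  have "[i..<i+(a+b)] = [i..<i+a] @ [i+a..<i+a+b]"
    using upt_add_eq_append[of i "i+a" b] by (simp add: add.assoc)
  then show ?thesis unfolding seg_def by simp
qed
lemma seg_Suc: "seg i (Suc L) = seg i L @ [u (i+L)]"
  unfolding seg_def by simp

lemma seg_shift: "1 \<le> i \<Longrightarrow> i + L \<le> 2^k \<Longrightarrow> seg (2^k*t + i) L = seg i L"
proof (rule nth_equalityI)
  assume a: "1 \<le> i" "i + L \<le> 2^k"
  show "length (seg (2^k*t + i) L) = length (seg i L)" by simp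
  fix j assume j: "j < length (seg (2^k*t + i) L)"
  then have j': "j < L" by simp
  have "seg (2^k*t + i) L ! j = u (2^k*t + (i+j))" using j' nth_seg[of j L] by (simp add: add.assoc)
  also have "\<dots> = u (i+j)" using a j' by (intro u_per) auto
  finally show "seg (2^k*t + i) L ! j = seg i L ! j" using j' nth_seg by simp
qed

lemma tau_append: "tau (v @ w) = tau v @ tau w" by (simp add: tau_def)
lemma taupow_append: "(tau^^n) (v @ w) = (tau^^n) v @ (tau^^n) w"
  by (induction n) (auto simp: tau_append)
lemma tau_single: "c \<noteq> La \<Longrightarrow> tau [c] = [nx c]"
  by (cases c) (auto simp: tau_def)
lemma taupow_single: "c \<noteq> La \<Longrightarrow> (tau^^n) [c] = [(nx^^n) c]"
  by (induction n) (auto simp: tau_single funpow_nx_ne2)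

lemma taupow_a: "(tau^^n) [La] = seg 1 (2^Suc n - 1)"
proof (induction n)
  case 0 then show ?case by (simp add: seg_def u_Suc0)
next
  case (Suc n)
  let ?T = "seg 1 (2^Suc n - 1)"
  have "(tau^^Suc n) [La] = (tau^^n) ([La] @ [Lx] @ [La])"
  proof -
    have "(tau^^Suc n) [La] = (tau^^n) (tau [La])" by (simp only: funpow_Suc_right comp_def)
    moreover have "tau [La] = [La] @ [Lx] @ [La]" by (simp add: tau_def)
    ultimately show ?thesis by simp
  qed
  also have "\<dots> = ?T @ [(nx^^n) Lx] @ ?T"
  proof -
    have hx: "(tau^^n)[Lx] = [(nx^^n) Lx]" by (rule taupow_single) simp
    show ?thesis unfolding taupow_append hx Suc.IH by simp
  qed
  also have "\<dots> = seg 1 (2^Suc (Suc n) - 1)"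
  proof -
    define m where "m = (2::nat)^Suc n - 1"
    have p: "(2::nat)^Suc n \<ge> 1" by simp
    have e: "(2::nat)^Suc (Suc n) - 1 = m + (1 + m)"
      using p unfolding m_def by (simp only: power_Suc[of 2 "Suc n"])
    have m1: "1 + m = 2^Suc n * 1" using p unfolding m_def by simp
    have u1: "u (1 + m) = (nx^^n) Lx"
    proof -
      have "u (1 + m) = (nx^^Suc n) La" unfolding m1 by (subst u_pow) (auto simp: u_Suc0)
      moreover have "(nx^^Suc n) La = (nx^^n) (nx La)" by (simp only: funpow_Suc_right comp_def)
      ultimately show ?thesis by simp
    qed
    have s2: "seg (1 + m + 1) m = seg 1 m"
      using seg_shift[of 1 m "Suc n" 1] m1 by simp
    have s1: "seg (1+m) 1 = [u (1+m)]" by (simp add: seg_def)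
    have "seg 1 (m + (1+m)) = seg 1 m @ seg (1+m) 1 @ seg (1+m+1) m" by (simp only: seg_add)
    then have "seg 1 (m + (1+m)) = seg 1 m @ [(nx^^n) Lx] @ seg 1 m" by (simp only: s1 s2 u1)
    then show ?thesis by (simp only: e m_def)
  qed
  finally show ?case .
qed

lemma u_2: "u 2 = Lx" by (subst u.simps) (simp add: u_Suc0)
lemma u_4: "u 4 = Ly" by (subst u.simps) (simp add: u_2)
lemma u_8: "u 8 = Lz" by (subst u.simps) (simp add: u_4)

lemma Sub_seg:
  assumes "v \<in> Sub (seg i N)" and that: "i \<ge> 1"
  shows "\<exists>j\<ge>1. v = seg j (length v)"
proof -
  obtain p s where ps: "seg i N = p @ v @ s" using assms by (auto simp: Sub_def)
  have len: "N = length p + length v + length s" using arg_cong[OF ps, of length] by simp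
  have "v = seg (i + length p) (length v)"
  proof (rule nth_equalityI)
    show "length v = length (seg (i + length p) (length v))" by simp
    fix k assume k: "k < length v"
    have "v ! k = (p @ v @ s) ! (length p + k)" using k by (simp add: nth_append)
    also have "\<dots> = seg i N ! (length p + k)" using ps by simp
    also have "\<dots> = u (i + (length p + k))" using k len by (intro nth_seg) simp
    finally show "v ! k = seg (i + length p) (length v) ! k" using k by (simp add: nth_seg add.assoc)
  qed
  moreover have "i + length p \<ge> 1" using that by simp
  ultimately show ?thesis by blast
qed

lemma seg_Sub: "1 \<le> i \<Longrightarrow> i + L \<le> 1 + N \<Longrightarrow> seg i L \<in> Sub (seg 1 N)"
proof -
  assume a: "1 \<le> i" "i + L \<le> 1 + N"
  have e: "N = (i - 1) + (L + (N + 1 - i - L))" using a by simp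
  have "seg 1 N = seg 1 (i-1) @ seg (1 + (i-1)) L @ seg (1 + (i - 1) + L) (N + 1 - i - L)"
    by (subst e) (simp only: seg_add)
  then have "seg 1 N = seg 1 (i-1) @ seg i L @ seg (1 + (i - 1) + L) (N + 1 - i - L)"
    using a by simp
  then show ?thesis unfolding Sub_def by blast
qed

lemma Sub_single: "v \<in> Sub [c] \<Longrightarrow> v = [] \<or> v = [c]"
  unfolding Sub_def by (auto simp: append_eq_Cons_conv Cons_eq_append_conv)

lemma Sub_tau_char: "v \<in> Sub_tau \<longleftrightarrow> (\<exists>i\<ge>1. v = seg i (length v))"
proof
  assume "v \<in> Sub_tau"
  then obtain s n where v: "v \<in> Sub ((tau^^n) [s])" unfolding Sub_tau_def by blast
  show "\<exists>i\<ge>1. v = seg i (length v)"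
  proof (cases "s = La")
    case True
    then show ?thesis using v Sub_seg[of v 1] by (simp add: taupow_a)
  next
    case False
    let ?c = "(nx^^n) s"
    have c: "?c \<noteq> La" using False funpow_nx_ne2 by blast
    have "v = [] \<or> v = [?c]" using v taupow_single[OF False] Sub_single by simp
    moreover have "seg 1 0 = []" by (simp add: seg_def)
    moreover have "seg 2 1 = [Lx]" "seg 4 1 = [Ly]" "seg 8 1 = [Lz]"
      by (simp_all add: seg_def u_2 u_4 u_8)
    moreover have "?c = Lx \<or> ?c = Ly \<or> ?c = Lz" using c by (cases ?c) auto
    ultimately have "v = seg 1 (length v) \<or> v = seg 2 (length v) \<or> v = seg 4 (length v) \<or> v = seg 8 (length v)"
      by auto
    moreover have "(1::nat) \<ge> 1" "(2::nat) \<ge> 1" "(4::nat) \<ge> 1" "(8::nat) \<ge> 1" by auto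
    ultimately show ?thesis by blast
  qed
next
  assume "\<exists>i\<ge>1. v = seg i (length v)"
  then obtain i where i: "i \<ge> 1" "v = seg i (length v)" by blast
  let ?L = "length v"
  have lt: "i + ?L < 2 ^ (i + ?L)" by (rule less_exp)
  have "2 ^ (i + ?L) \<le> (2::nat) ^ Suc (i + ?L) - 1" by simp
  then have "seg i ?L \<in> Sub (seg 1 (2 ^ Suc (i + ?L) - 1))" using i lt by (intro seg_Sub) linarith+
  then have "v \<in> Sub ((tau^^(i+?L)) [La])" using i by (simp add: taupow_a)
  then show "v \<in> Sub_tau" unfolding Sub_tau_def by blast
qed

definition AL :: "nat \<Rightarrow> letter list set" where
  "AL L = {v \<in> Sub_tau. length v = L}"

lemma AL_char: "v \<in> AL L \<longleftrightarrow> (\<exists>i\<ge>1. v = seg i L)"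
  unfolding AL_def Sub_tau_char by auto

lemma UNIV_letter: "(UNIV :: letter set) = {La, Lx, Ly, Lz}"
  using letter.exhaust by auto

lemma finite_AL: "finite (AL L)"
proof -
  have "AL L \<subseteq> {xs. set xs \<subseteq> UNIV \<and> length xs = L}" unfolding AL_def by auto
  moreover have "finite {xs. set xs \<subseteq> (UNIV::letter set) \<and> length xs = L}"
    by (rule finite_lists_length_eq) (simp add: UNIV_letter)
  ultimately show ?thesis by (rule finite_subset)
qed

lemma count2:
  assumes fin: "finite B" and tk: "\<forall>w\<in>B. take L w \<in> A"
    and sur: "\<forall>v\<in>A. \<exists>w\<in>B. take L w = v"
    and v: "v1 \<in> A" "v2 \<in> A" "v1 \<noteq> v2"
    and S1: "S1 \<subseteq> {w\<in>B. take L w = v1}" and S2: "S2 \<subseteq> {w\<in>B. take L w = v2}"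
  shows "card A + card S1 + card S2 \<le> card B + 2"
proof -
  let ?F1 = "{w\<in>B. take L w = v1}" and ?F2 = "{w\<in>B. take L w = v2}"
  let ?R = "B - ?F1 - ?F2"
  have finA: "finite A"
  proof -
    have "A \<subseteq> take L ` B" using sur by (metis image_eqI subsetI)
    then show ?thesis using fin finite_surj by blast
  qed
  have "A - {v1, v2} \<subseteq> take L ` ?R" using sur v by fastforce
  then have c1: "card (A - {v1,v2}) \<le> card ?R"
    using card_mono[OF _ \<open>A - {v1, v2} \<subseteq> _\<close>] card_image_le[of ?R "take L"] fin by force
  have c2: "card (A - {v1,v2}) = card A - 2" using v finA by (simp add: card_Diff_subset)
  have "card {v1,v2} \<le> card A" using v finA by (intro card_mono) auto
  then have cA: "card A \<ge> 2" using v by simp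
  have e: "B = ?F1 \<union> (?F2 \<union> ?R)" by blast
  have "card (?F1 \<union> (?F2 \<union> ?R)) = card ?F1 + card (?F2 \<union> ?R)"
    by (rule card_Un_disjoint) (use fin v in auto)
  moreover have "card (?F2 \<union> ?R) = card ?F2 + card ?R"
    by (rule card_Un_disjoint) (use fin in auto)
  ultimately have "card B = card ?F1 + (card ?F2 + card ?R)" using e by simp
  moreover have "card S1 \<le> card ?F1" using S1 fin by (intro card_mono) auto
  moreover have "card S2 \<le> card ?F2" using S2 fin by (intro card_mono) auto
  ultimately show ?thesis using c1 c2 cA by linarith
qed

lemma count1:
  assumes fin: "finite B" and tk: "\<forall>w\<in>B. take L w \<in> A"
    and sur: "\<forall>v\<in>A. \<exists>w\<in>B. take L w = v"
    and v: "v1 \<in> A"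
    and S1: "S1 \<subseteq> {w\<in>B. take L w = v1}"
  shows "card A + card S1 \<le> card B + 1"
proof -
  let ?F1 = "{w\<in>B. take L w = v1}"
  let ?R = "B - ?F1"
  have finA: "finite A"
  proof -
    have "A \<subseteq> take L ` B" using sur by (metis image_eqI subsetI)
    then show ?thesis using fin finite_surj by blast
  qed
  have "A - {v1} \<subseteq> take L ` ?R" using sur v by fastforce
  then have c1: "card (A - {v1}) \<le> card ?R"
    using card_mono[OF _ \<open>A - {v1} \<subseteq> _\<close>] card_image_le[of ?R "take L"] fin by force
  have c2: "card (A - {v1}) = card A - 1" using v finA by simp
  have cA: "card A \<ge> 1" using v finA card_0_eq by fastforce
  have e: "B = ?F1 \<union> ?R" by blast
  have "card (?F1 \<union> ?R) = card ?F1 + card ?R"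
    by (rule card_Un_disjoint) (use fin v in auto)
  then have "card B = card ?F1 + card ?R" using e by simp
  moreover have "card S1 \<le> card ?F1" using S1 fin by (intro card_mono) auto
  ultimately show ?thesis using c1 c2 cA by linarith
qed

lemma AL_take: "w \<in> AL (Suc L) \<Longrightarrow> take L w \<in> AL L"
  unfolding AL_char by (auto simp: seg_Suc)
lemma AL_sur: assumes "v \<in> AL L" shows "\<exists>w\<in>AL (Suc L). take L w = v"
proof -
  obtain i where i: "i\<ge>1" "v = seg i L" using assms AL_char by blast
  then have "seg i (Suc L) \<in> AL (Suc L)" using AL_char by blast
  moreover have "take L (seg i (Suc L)) = v" using i by (simp add: seg_Suc)
  ultimately show ?thesis by blast
qed

lemma ext_in: "L < p \<Longrightarrow> seg (p - L) (Suc L) \<in> AL (Suc L)"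
  unfolding AL_char by (rule exI[of _ "p - L"]) auto
lemma ext_take: "take L (seg i (Suc L)) = seg i L"
  by (simp add: seg_Suc)
lemma ext_last: "L \<le> p \<Longrightarrow> seg (p - L) (Suc L) ! L = u p"
  by (simp add: nth_seg)

lemma complexity_AL: "complexity L = card (AL L)"
  unfolding complexity_def AL_def ..

lemma fsw: "(nx ^^ n) (nx c) = nx ((nx ^^ n) c)" by (simp add: funpow_swap1)

lemma partA:
  assumes L: "L \<ge> 1"
  defines "S \<equiv> {seg (2^L*1 - L) (Suc L), seg (2^L*2 - L) (Suc L), seg (2^L*4 - L) (Suc L)}"
  shows "S \<subseteq> {w\<in>AL (Suc L). take L w = seg (2^L - L) L}" and "card S = 3"
proof -
  have lt: "L < 2^L" by (rule less_exp)
  let ?c = "(nx^^L) La"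
  have c: "?c \<noteq> La" using L funpow_nx_ne by blast
  have l1: "seg (2^L*1 - L) (Suc L) ! L = ?c"
    using ext_last[of L "2^L*1"] lt u_pow[of 1 L] by (simp add: u_Suc0)
  have l2: "seg (2^L*2 - L) (Suc L) ! L = nx ?c"
    using ext_last[of L "2^L*2"] lt u_pow[of 2 L] by (simp add: u_2 fsw[symmetric])
  have l4: "seg (2^L*4 - L) (Suc L) ! L = nx (nx ?c)"
    using ext_last[of L "2^L*4"] lt u_pow[of 4 L] by (simp add: u_4 fsw[symmetric])
  have d: "?c \<noteq> nx ?c" "?c \<noteq> nx (nx ?c)" "nx ?c \<noteq> nx (nx ?c)"
    using nx_neq nx_dist[OF c] by metis+
  have "seg (2^L*1 - L) (Suc L) \<noteq> seg (2^L*2 - L) (Suc L)" using l1 l2 d by metis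
  moreover have "seg (2^L*1 - L) (Suc L) \<noteq> seg (2^L*4 - L) (Suc L)" using l1 l4 d by metis
  moreover have "seg (2^L*2 - L) (Suc L) \<noteq> seg (2^L*4 - L) (Suc L)" using l2 l4 d by metis
  ultimately show "card S = 3" unfolding S_def by simp
  have t1: "seg (2^L*1 - L) L = seg (2^L - L) L" by simp
  have t2: "seg (2^L*2 - L) L = seg (2^L - L) L"
  proof -
    have "2^L*2 - L = 2^L*1 + (2^L - L)" using lt by simp
    then have "seg (2^L*2 - L) L = seg (2^L*1 + (2^L - L)) L" by (simp only:)
    also have "\<dots> = seg (2^L - L) L" using lt by (intro seg_shift) linarith+
    finally show ?thesis .
  qed
  have t4: "seg (2^L*4 - L) L = seg (2^L - L) L"
  proof -
    have "2^L*4 - L = 2^L*3 + (2^L - L)" using lt by simp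
    then have "seg (2^L*4 - L) L = seg (2^L*3 + (2^L - L)) L" by (simp only:)
    also have "\<dots> = seg (2^L - L) L" using lt by (intro seg_shift) linarith+
    finally show ?thesis .
  qed
  have lt2: "L < 2^L*2" "L < 2^L*4" using lt by linarith+
  show "S \<subseteq> {w\<in>AL (Suc L). take L w = seg (2^L - L) L}"
    unfolding S_def using ext_in[of L "2^L*1"] ext_in[OF lt2(1)] ext_in[OF lt2(2)] lt t2 t4
    by (simp add: ext_take)
qed

lemma nx_pow_Lz: "k \<ge> 1 \<Longrightarrow> (nx^^k) Lz = (nx^^k) La"
proof -
  assume "k \<ge> 1"
  then obtain k' where k: "k = Suc k'" by (cases k) auto
  show ?thesis unfolding k funpow_Suc_right comp_def by simp
qed

lemma u_odd': "odd q \<Longrightarrow> u q = La"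
  by (metis oddE u_odd)

lemma key_pos:
  assumes k: "k \<ge> 1" and h: "h = (2::nat)^k" and d: "1 \<le> d" "d < 3*h"
  shows "u (h*10 - d) = u (h*9 - d)"
proof -
  define a where "a = d div h"
  define b where "b = d mod h"
  have hpos: "h > 0" using h by simp
  have dab: "d = h*a + b" unfolding a_def b_def by simp
  have blt: "b < h" unfolding b_def using hpos by simp
  have ale: "a \<le> 2"
  proof (rule ccontr)
    assume "\<not> a \<le> 2"
    then have "h*a \<ge> h*3" by simp
    then show False using dab d by linarith
  qed
  show ?thesis
  proof (cases "b = 0")
    case False
    have e1: "h*10 - d = h*(9-a) + (h-b)" and e2: "h*9 - d = h*(8-a) + (h-b)"
      using ale dab blt by (auto simp: numeral_eq_Suc le_Suc_eq) 
    have "u (h*(9-a) + (h-b)) = u (h - b)" unfolding h using False blt h by (intro u_per) auto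
    moreover have "u (h*(8-a) + (h-b)) = u (h - b)" unfolding h using False blt h by (intro u_per) auto
    ultimately show ?thesis using e1 e2 by simp
  next
    case True
    have u9: "u (h*9) = (nx^^k) La" unfolding h using u_pow[of 9 k] u_odd'[of 9] by simp
    have u8: "u (h*8) = (nx^^k) La" unfolding h using u_pow[of 8 k] u_8 nx_pow_Lz[OF k] by simp
    have u7: "u (h*7) = (nx^^k) La" unfolding h using u_pow[of 7 k] u_odd'[of 7] by simp
    have "a = 1 \<or> a = 2" using ale dab True d by (cases a) (auto simp: le_Suc_eq)
    then show ?thesis
    proof
      assume "a = 1"
      then have "h*10 - d = h*9" "h*9 - d = h*8" using dab True by auto
      then show ?thesis using u9 u8 by simp
    next
      assume "a = 2"
      then have "h*10 - d = h*8" "h*9 - d = h*7" using dab True by auto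
      then show ?thesis using u8 u7 by simp
    qed
  qed
qed

lemma key_seg:
  assumes k: "k \<ge> 1" and h: "h = (2::nat)^k" and L: "2*h \<le> L" "L < 3*h"
  shows "seg (h*10 - L) L = seg (h*9 - L) L"
proof (rule nth_equalityI)
  show "length (seg (h*10 - L) L) = length (seg (h*9 - L) L)" by simp
  fix j assume "j < length (seg (h*10 - L) L)"
  then have j: "j < L" by simp
  have "seg (h*10 - L) L ! j = u (h*10 - L + j)" using j by (rule nth_seg)
  also have "h*10 - L + j = h*10 - (L - j)" using j L by simp
  also have "u (h*10 - (L - j)) = u (h*9 - (L - j))" using k h L j by (intro key_pos) auto
  also have "h*9 - (L - j) = h*9 - L + j" using j L by simp
  also have "u (h*9 - L + j) = seg (h*9 - L) L ! j" using j by (simp add: nth_seg)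
  finally show "seg (h*10 - L) L ! j = seg (h*9 - L) L ! j" .
qed

lemma partB:
  assumes k: "k \<ge> 1" and h: "h = (2::nat)^k" and L: "2*h \<le> L" "L < 3*h"
  defines "S \<equiv> {seg (h*9 - L) (Suc L), seg (h*10 - L) (Suc L)}"
  shows "S \<subseteq> {w\<in>AL (Suc L). take L w = seg (h*9 - L) L}" and "card S = 2"
    and "seg (h*9 - L) L \<noteq> seg (2^L - L) L"
proof -
  have u9: "u (h*9) = (nx^^k) La" unfolding h using u_pow[of 9 k] u_odd'[of 9] by simp
  have u10: "u (h*10) = nx ((nx^^k) La)"
  proof -
    have "h*10 = 2^Suc k * 5" unfolding h by simp
    then have "u (h*10) = (nx^^Suc k) (u 5)" using u_pow[of 5 "Suc k"] by (simp only:)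
    then show ?thesis using u_odd'[of 5] by simp
  qed
  have l9: "seg (h*9 - L) (Suc L) ! L = u (h*9)" using L by (intro ext_last) linarith
  have l10: "seg (h*10 - L) (Suc L) ! L = u (h*10)" using L by (intro ext_last) linarith
  have "seg (h*9 - L) (Suc L) \<noteq> seg (h*10 - L) (Suc L)"
    using l9 l10 u9 u10 nx_neq by metis
  then show "card S = 2" unfolding S_def by simp
  have "L < h*9" "L < h*10" using L by linarith+
  then have "seg (h*9 - L) (Suc L) \<in> AL (Suc L)" "seg (h*10 - L) (Suc L) \<in> AL (Suc L)"
    using ext_in by blast+
  moreover have "take L (seg (h*9 - L) (Suc L)) = seg (h*9 - L) L"
     "take L (seg (h*10 - L) (Suc L)) = seg (h*9 - L) L"
    using ext_take key_seg[OF k h L] by simp_all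
  ultimately show "S \<subseteq> {w\<in>AL (Suc L). take L w = seg (h*9 - L) L}"
    unfolding S_def by blast
  have lt: "L < 2^L" by (rule less_exp)
  have kL: "Suc k < L"
  proof -
    have "Suc k < 2^Suc k" by (rule less_exp)
    then show ?thesis using L h by simp
  qed
  define m where "m = L - Suc k"
  have m1: "m \<ge> 1" using kL m_def by simp
  have Lm: "L = Suc k + m" using kL m_def by simp
  have pL: "(2::nat)^L = 2^Suc k * 2^m" by (subst Lm) (simp only: power_add)
  obtain m' where m': "m = Suc m'" using m1 by (cases m) auto
  have "2^L - 2*h = 2^Suc k * (2^m - 1)" unfolding pL h by (simp add: diff_mult_distrib2)
  moreover have "odd ((2::nat)^m - 1)" using m' by simp
  moreover have "(2::nat)^m - 1 \<ge> 1"
  proof -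
    have "(2::nat)^m' \<ge> 1" by simp
    moreover have "(2::nat)^m = 2*2^m'" using m' by simp
    ultimately show ?thesis by linarith
  qed
  ultimately have uA: "u (2^L - 2*h) = nx ((nx^^k) La)"
    using u_pow[of "2^m - 1" "Suc k"] u_odd' by simp
  have u7: "u (h*7) = (nx^^k) La" unfolding h using u_pow[of 7 k] u_odd'[of 7] by simp
  have i: "L - 2*h < L" using L h by simp
  have a1: "seg (2^L - L) L ! (L - 2*h) = u (2^L - 2*h)"
    using nth_seg[OF i, of "2^L - L"] lt L by simp
  have a2: "seg (h*9 - L) L ! (L - 2*h) = u (h*7)"
    using nth_seg[OF i, of "h*9 - L"] L by (simp add: mult.commute)
  show "seg (h*9 - L) L \<noteq> seg (2^L - L) L"
    using a1 a2 uA u7 nx_neq by metis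
qed

theorem mainTheorem5:
  shows "(\<forall>L::nat. L \<ge> 1 \<longrightarrow> int (complexity (L + 1)) - int (complexity L) \<ge> 2)
       \<and> (\<forall>n L::nat. n \<ge> 2 \<and> 2 ^ n \<le> L \<and> L \<le> 2 ^ n + 2 ^ (n - 1) - 1
            \<longrightarrow> int (complexity (L + 1)) - int (complexity L) \<ge> 3)"
proof (intro conjI allI impI)
  have fin: "\<And>L. finite (AL (Suc L))" by (rule finite_AL)
  have tk: "\<And>L. \<forall>w\<in>AL (Suc L). take L w \<in> AL L" using AL_take by blast
  have sur: "\<And>L. \<forall>v\<in>AL L. \<exists>w\<in>AL (Suc L). take L w = v" using AL_sur by blast
  have v1: "\<And>L. seg (2^L - L) L \<in> AL L"
  proof -
    fix L :: nat
    have "L < 2^L" by (rule less_exp)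
    then have "1 \<le> 2^L - L" by linarith
    then show "seg (2^L - L) L \<in> AL L" unfolding AL_char by blast
  qed
  {
    fix L :: nat assume L: "L \<ge> 1"
    have "card (AL L) + 3 \<le> card (AL (Suc L)) + 1"
      using count1[OF fin tk sur v1 partA(1)[OF L]] partA(2)[OF L] by simp
    then show "int (complexity (L + 1)) - int (complexity L) \<ge> 2"
      unfolding complexity_AL by simp
  }
  fix n L :: nat assume a: "n \<ge> 2 \<and> 2 ^ n \<le> L \<and> L \<le> 2 ^ n + 2 ^ (n - 1) - 1"
  then obtain k where nk: "n = Suc k" and k: "k \<ge> 1" by (cases n) auto
  define h where "h = (2::nat)^k"
  have hp: "h \<ge> 1" unfolding h_def by simp
  have a': "2*h \<le> L" "L \<le> 2*h + h - 1" using a unfolding nk h_def by auto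
  have L: "2*h \<le> L" "L < 3*h" using a' hp by linarith+
  have L1: "L \<ge> 1" using L hp by simp
  have "card (AL L) + 3 + 2 \<le> card (AL (Suc L)) + 2"
  proof -
    have "1 \<le> h*9 - L" using L by linarith
    then have v2: "seg (h*9 - L) L \<in> AL L" unfolding AL_char by blast
    have neq: "seg (2^L - L) L \<noteq> seg (h*9 - L) L" using partB(3)[OF k h_def L] by (rule not_sym)
    show ?thesis
      using count2[OF fin tk sur v1 v2 neq partA(1)[OF L1] partB(1)[OF k h_def L]]
        partA(2)[OF L1] partB(2)[OF k h_def L] by simp
  qed
  then show "int (complexity (L + 1)) - int (complexity L) \<ge> 3"
    unfolding complexity_AL by simp
qed

end
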